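(* Let $\mathfrak{g}$ be a finite-dimensional Lie algebra over a field $K$ of characteristic zero, and let $x\cdot y=[\phi(x),y]$ be an inner CPA-structure on $\mathfrak{g}$, with $\phi$ a Lie algebra endomorphism, and $A=(\mathfrak{g},\cdot)$. Define $I_0=0$ and $I_n=\{x\in\mathfrak{g}\mid x\cdot\mathfrak{g}\subseteq I_{n-1}\}$ for $n\ge1$. Then $\phi(I_n)\subseteq I_n$ for all $n$, and every Lie algebra ideal of $\mathfrak{g}$ is an ideal of the algebra $A$. Conversely, if the structure is nondegenerate, every ideal of the algebra $A$ is a Lie algebra ideal.
   Context: A CPA-structure on $\mathfrak{g}$ is a bilinear product $x\cdot y$ satisfying, for all $x,y,z$: $x\cdot y=y\cdot x$; $[x,y]\cdot z=x\cdot(y\cdot z)-y\cdot(x\cdot z)$; $x\cdot[y,z]=[x\cdot y,z]+[y,x\cdot z]$. It is inner if $x\cdot y=[\phi(x),y]$ with $\phi$ a Lie algebra homomorphism $\mathfrak{g}\to\mathfrak{g}$. It is nondegenerate if $\{x\mid x\cdot y=0\ \forall y\}=0$. A subspace $J$ is an ideal of $A$ if $\mathfrak{g}\cdot J\subseteq J$. *)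

theory Defs
  imports Complex_Main
begin

definition lie_algebra :: "('k::field \<Rightarrow> 'v::ab_group_add \<Rightarrow> 'v) \<Rightarrow> ('v \<Rightarrow> 'v \<Rightarrow> 'v) \<Rightarrow> bool" where
  "lie_algebra sc br \<longleftrightarrow>
     vector_space sc \<and>
     (\<forall>x. Vector_Spaces.linear sc sc (br x)) \<and>
     (\<forall>y. Vector_Spaces.linear sc sc (\<lambda>x. br x y)) \<and>
     (\<forall>x. br x x = 0) \<and>
     (\<forall>x y z. br x (br y z) + br y (br z x) + br z (br x y) = 0)"

definition fin_dim :: "('k::field \<Rightarrow> 'v::ab_group_add \<Rightarrow> 'v) \<Rightarrow> bool" where
  "fin_dim sc \<longleftrightarrow> (\<exists>B. finite_dimensional_vector_space sc B)"

definition lie_endo :: "('k::field \<Rightarrow> 'v::ab_group_add \<Rightarrow> 'v) \<Rightarrow> ('v \<Rightarrow> 'v \<Rightarrow> 'v) \<Rightarrow> ('v \<Rightarrow> 'v) \<Rightarrow> bool" where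
  "lie_endo sc br \<phi> \<longleftrightarrow> Vector_Spaces.linear sc sc \<phi> \<and> (\<forall>x y. \<phi> (br x y) = br (\<phi> x) (\<phi> y))"

definition cpa_structure :: "('k::field \<Rightarrow> 'v::ab_group_add \<Rightarrow> 'v) \<Rightarrow> ('v \<Rightarrow> 'v \<Rightarrow> 'v) \<Rightarrow> ('v \<Rightarrow> 'v \<Rightarrow> 'v) \<Rightarrow> bool" where
  "cpa_structure sc br pr \<longleftrightarrow>
     (\<forall>x. Vector_Spaces.linear sc sc (pr x)) \<and>
     (\<forall>y. Vector_Spaces.linear sc sc (\<lambda>x. pr x y)) \<and>
     (\<forall>x y. pr x y = pr y x) \<and>
     (\<forall>x y z. pr (br x y) z = pr x (pr y z) - pr y (pr x z)) \<and>
     (\<forall>x y z. pr x (br y z) = br (pr x y) z + br y (pr x z))"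

definition nondegenerate :: "('v::ab_group_add \<Rightarrow> 'v \<Rightarrow> 'v) \<Rightarrow> bool" where
  "nondegenerate pr \<longleftrightarrow> {x. \<forall>y. pr x y = 0} = {0}"

definition alg_ideal :: "('k::field \<Rightarrow> 'v::ab_group_add \<Rightarrow> 'v) \<Rightarrow> ('v \<Rightarrow> 'v \<Rightarrow> 'v) \<Rightarrow> 'v set \<Rightarrow> bool" where
  "alg_ideal sc pr J \<longleftrightarrow> module.subspace sc J \<and> (\<forall>x y. y \<in> J \<longrightarrow> pr x y \<in> J)"

definition lie_ideal :: "('k::field \<Rightarrow> 'v::ab_group_add \<Rightarrow> 'v) \<Rightarrow> ('v \<Rightarrow> 'v \<Rightarrow> 'v) \<Rightarrow> 'v set \<Rightarrow> bool" where
  "lie_ideal sc br J \<longleftrightarrow> module.subspace sc J \<and> (\<forall>x y. y \<in> J \<longrightarrow> br x y \<in> J)"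

fun I_seq :: "('v::zero \<Rightarrow> 'v \<Rightarrow> 'v) \<Rightarrow> nat \<Rightarrow> 'v set" where
  "I_seq pr 0 = {0}"
| "I_seq pr (Suc n) = {x. \<forall>y. pr x y \<in> I_seq pr n}"

end

theory Submission
  imports Defs
begin

theorem lemma2p11:
  fixes sc :: "'k::field_char_0 \<Rightarrow> 'v::ab_group_add \<Rightarrow> 'v"
    and br :: "'v \<Rightarrow> 'v \<Rightarrow> 'v"
    and \<phi> :: "'v \<Rightarrow> 'v"
  assumes "lie_algebra sc br"
    and "fin_dim sc"
    and "lie_endo sc br \<phi>"
    and "cpa_structure sc br (\<lambda>x y. br (\<phi> x) y)"
  shows "(\<forall>n. \<phi> ` I_seq (\<lambda>x y. br (\<phi> x) y) n \<subseteq> I_seq (\<lambda>x y. br (\<phi> x) y) n)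
       \<and> (\<forall>J. lie_ideal sc br J \<longrightarrow> alg_ideal sc (\<lambda>x y. br (\<phi> x) y) J)
       \<and> (nondegenerate (\<lambda>x y. br (\<phi> x) y) \<longrightarrow>
            (\<forall>J. alg_ideal sc (\<lambda>x y. br (\<phi> x) y) J \<longrightarrow> lie_ideal sc br J))"
proof -
  have linx: "\<And>x. Vector_Spaces.linear sc sc (br x)"
   and liny: "\<And>y. Vector_Spaces.linear sc sc (\<lambda>x. br x y)"
   and alt: "\<And>x. br x x = 0"
    using assms(1) unfolding lie_algebra_def by auto
  have linphi: "Vector_Spaces.linear sc sc \<phi>" and hom: "\<And>x y. \<phi> (br x y) = br (\<phi> x) (\<phi> y)"
    using assms(3) unfolding lie_endo_def by auto
  have comm: "\<And>x y. br (\<phi> x) y = br (\<phi> y) x"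
    using assms(4) unfolding cpa_structure_def by auto
  have addl: "\<And>a b c. br (a + b) c = br a c + br b c"
    using module_hom.add[OF liny[unfolded linear_iff_module_hom]] by blast
  have addr: "\<And>a b c. br c (a + b) = br c a + br c b"
    using module_hom.add[OF linx[unfolded linear_iff_module_hom]] by blast
  have zl: "\<And>c. br 0 c = 0"
    by (metis add_cancel_right_left addl add_0)
  have zr: "\<And>c. br c 0 = 0"
    by (metis add_cancel_right_left addr add_0)
  have neg: "\<And>a b. br b a = br a (- b)"
  proof -
    fix a b
    have e: "br (a + b) (a + b) = br a a + br a b + (br b a + br b b)" by (simp only: addl addr add_ac)
    have s1: "br a b + br b a = 0" using e by (simp add: alt)
    have s2: "br a b + br a (- b) = 0" by (metis addr zr right_minus)
    show "br b a = br a (- b)" using s1 s2 by (metis add_left_cancel)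
  qed
  have phi0: "\<phi> 0 = 0" using module_hom.zero[OF linphi[unfolded linear_iff_module_hom]] by blast
  have phisub: "\<And>a b. \<phi> (a - b) = \<phi> a - \<phi> b"
    using module_hom.diff[OF linphi[unfolded linear_iff_module_hom]] by blast
  have P1: "\<forall>n. \<phi> ` I_seq (\<lambda>x y. br (\<phi> x) y) n \<subseteq> I_seq (\<lambda>x y. br (\<phi> x) y) n"
  proof
    fix n show "\<phi> ` I_seq (\<lambda>x y. br (\<phi> x) y) n \<subseteq> I_seq (\<lambda>x y. br (\<phi> x) y) n"
    proof (cases n)
      case 0 then show ?thesis by (simp add: phi0)
    next
      case (Suc m)
      show ?thesis
      proof
        fix z assume "z \<in> \<phi> ` I_seq (\<lambda>x y. br (\<phi> x) y) n"
        then obtain x where z: "z = \<phi> x" and x: "\<forall>y. br (\<phi> x) y \<in> I_seq (\<lambda>x y. br (\<phi> x) y) m"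
          using Suc by auto
        have "\<And>y. br (\<phi> z) y = br (\<phi> x) (- \<phi> y)"
          using comm neg z by metis
        then show "z \<in> I_seq (\<lambda>x y. br (\<phi> x) y) n" using x Suc by simp
      qed
    qed
  qed
  have P2: "\<forall>J. lie_ideal sc br J \<longrightarrow> alg_ideal sc (\<lambda>x y. br (\<phi> x) y) J"
    unfolding lie_ideal_def alg_ideal_def by auto
  have P3: "nondegenerate (\<lambda>x y. br (\<phi> x) y) \<longrightarrow>
            (\<forall>J. alg_ideal sc (\<lambda>x y. br (\<phi> x) y) J \<longrightarrow> lie_ideal sc br J)"
  proof (intro impI allI)
    fix J assume nd: "nondegenerate (\<lambda>x y. br (\<phi> x) y)" and J: "alg_ideal sc (\<lambda>x y. br (\<phi> x) y) J"
    have "inj \<phi>"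
    proof (rule injI)
      fix a b assume "\<phi> a = \<phi> b"
      then have "\<phi> (a - b) = 0" by (simp add: phisub)
      then have "a - b \<in> {x. \<forall>y. br (\<phi> x) y = 0}" by (simp add: zl)
      then show "a = b" using nd unfolding nondegenerate_def by auto
    qed
    obtain B where B: "finite_dimensional_vector_space sc B" using assms(2) unfolding fin_dim_def by auto
    have "surj \<phi>" using finite_dimensional_vector_space.linear_inj_imp_surj[OF B linphi \<open>inj \<phi>\<close>] .
    show "lie_ideal sc br J"
      unfolding lie_ideal_def
    proof (intro conjI allI impI)
      show "module.subspace sc J" using J unfolding alg_ideal_def by auto
    next
      fix x y assume "y \<in> J"
      obtain x' where "x = \<phi> x'" using \<open>surj \<phi>\<close> by (metis surjD)
      then show "br x y \<in> J" using J \<open>y \<in> J\<close> unfolding alg_ideal_def by auto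
    qed
  qed
  show ?thesis using P1 P2 P3 by blast
qed

end
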